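(* The exponential map $f\colon\mathbb{C}\to\mathbb{C}$, $z\mapsto e^z$, is chaotic in the sense of Devaney.
   Context: Let $X\subset\mathbb{C}$ be infinite and $f\colon X\to X$ continuous. Then $f$ is chaotic in the sense of Devaney if (a) the set of periodic points of $f$ (points $x$ with $f^n(x)=x$ for some $n\geq1$, where $f^n$ is the $n$-th iterate) is dense in $X$, and (b) $f$ is topologically transitive: for all open sets $U,V\subset\mathbb{C}$ that intersect $X$, there are $z\in U\cap X$ and $n\geq 0$ with $f^n(z)\in V$. *)

theory Defs
  imports "HOL-Analysis.Analysis"
begin

definition periodic_point :: "(complex \<Rightarrow> complex) \<Rightarrow> complex \<Rightarrow> bool" where
  "periodic_point f x \<longleftrightarrow> (\<exists>n\<ge>1. (f ^^ n) x = x)"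

definition devaney_chaotic :: "complex set \<Rightarrow> (complex \<Rightarrow> complex) \<Rightarrow> bool" where
  "devaney_chaotic X f \<longleftrightarrow>
     infinite X \<and> f ` X \<subseteq> X \<and> continuous_on X f \<and>
     X \<subseteq> closure {x \<in> X. periodic_point f x} \<and>
     (\<forall>U V. open U \<and> open V \<and> U \<inter> X \<noteq> {} \<and> V \<inter> X \<noteq> {} \<longrightarrow>
        (\<exists>z\<in>U \<inter> X. \<exists>n::nat. (f ^^ n) z \<in> V))"

end

theory Submission
  imports Defs "HOL-Complex_Analysis.Complex_Analysis"
begin


definition Inv :: "complex set \<Rightarrow> complex set \<Rightarrow> nat \<Rightarrow> bool" where
  "Inv S T n \<longleftrightarrow> (\<exists>h. continuous_on T h \<and> h ` T \<subseteq> S \<and> (\<forall>v\<in>T. (exp ^^ n) (h v) = v))"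

lemma Inv_refl: "Inv S S 0"
  unfolding Inv_def by (rule exI[of _ id]) (auto intro: continuous_on_id)

lemma Inv_mono: "Inv S T n \<Longrightarrow> S \<subseteq> S' \<Longrightarrow> T' \<subseteq> T \<Longrightarrow> Inv S' T' n"
  unfolding Inv_def by (meson continuous_on_subset image_mono order_trans subsetD)

lemma Inv_trans: assumes "Inv S T n" "Inv T W k" shows "Inv S W (n + k)"
proof -
  obtain h1 where h1: "continuous_on T h1" "h1 ` T \<subseteq> S" "\<forall>v\<in>T. (exp ^^ n) (h1 v) = v"
    using assms(1) unfolding Inv_def by blast
  obtain h2 where h2: "continuous_on W h2" "h2 ` W \<subseteq> T" "\<forall>v\<in>W. (exp ^^ k) (h2 v) = v"
    using assms(2) unfolding Inv_def by blast
  have "continuous_on W (h1 \<circ> h2)"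
    using h1(1) h2(1,2) continuous_on_compose continuous_on_subset by blast
  moreover have "(h1 \<circ> h2) ` W \<subseteq> S" using h1(2) h2(2) by auto
  moreover have "\<forall>v\<in>W. (exp ^^ (n + k)) ((h1 \<circ> h2) v) = v"
  proof
    fix v assume v: "v \<in> W"
    have "(exp ^^ (n + k)) ((h1 \<circ> h2) v) = (exp ^^ k) ((exp ^^ n) (h1 (h2 v)))"
      by (simp add: add.commute funpow_add)
    also have "\<dots> = v" using v h1(3) h2 by auto
    finally show "(exp ^^ (n + k)) ((h1 \<circ> h2) v) = v" .
  qed
  ultimately show ?thesis unfolding Inv_def by blast
qed

lemma notin_npR: "0 < Re u \<Longrightarrow> u \<notin> \<real>\<^sub>\<le>\<^sub>0"
  by (metis complex_nonpos_Reals_iff not_le)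

lemma Inv_expball:
  assumes r: "0 < r" "r \<le> 1"
  shows "Inv (cball \<zeta> r) (cball (exp \<zeta>) (norm (exp \<zeta>) * r / 4)) 1"
proof -
  define h where "h v = \<zeta> + Ln (v / exp \<zeta>)" for v
  let ?T = "cball (exp \<zeta>) (norm (exp \<zeta>) * r / 4)"
  have key: "norm (v / exp \<zeta> - 1) \<le> r / 4" if "v \<in> ?T" for v
  proof -
    have "v / exp \<zeta> - 1 = (v - exp \<zeta>) / exp \<zeta>" by (simp add: field_simps)
    then have "norm (v / exp \<zeta> - 1) = norm (v - exp \<zeta>) / norm (exp \<zeta>)"
      by (simp add: norm_divide)
    also have "\<dots> \<le> (norm (exp \<zeta>) * r / 4) / norm (exp \<zeta>)"
      using that by (intro divide_right_mono) (auto simp: dist_norm norm_minus_commute)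
    finally show ?thesis by simp
  qed
  have re: "0 < Re (v / exp \<zeta>)" if "v \<in> ?T" for v
  proof -
    have "\<bar>Re (v / exp \<zeta> - 1)\<bar> \<le> r/4" using key[OF that] abs_Re_le_cmod order_trans by blast
    then have "1 - r/4 \<le> Re (v / exp \<zeta>)" by (simp only: minus_complex.sel one_complex.sel)
    then show ?thesis using r by linarith
  qed
  have "continuous_on ?T h"
    unfolding h_def
    by (intro continuous_intros) (use re notin_npR in \<open>auto\<close>)
  moreover have "h ` ?T \<subseteq> cball \<zeta> r"
  proof
    fix y assume "y \<in> h ` ?T"
    then obtain v where v: "v \<in> ?T" "y = h v" by auto
    have "norm (Ln (1 + (v / exp \<zeta> - 1))) \<le> 2 * norm (v / exp \<zeta> - 1)"
      using key[OF v(1)] r by (intro norm_Ln_le) auto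
    also have "\<dots> \<le> r" using key[OF v(1)] r by auto
    finally show "y \<in> cball \<zeta> r" using v by (simp add: h_def dist_norm)
  qed
  moreover have "\<forall>v\<in>?T. (exp ^^ 1) (h v) = v"
  proof
    fix v assume v: "v \<in> ?T"
    have "v / exp \<zeta> \<noteq> 0" using re[OF v] by auto
    then show "(exp ^^ 1) (h v) = v" by (simp add: h_def exp_add)
  qed
  ultimately show ?thesis unfolding Inv_def by blast
qed

lemma Inv_cover:
  assumes rho: "0 \<le> \<rho>" "\<rho> < norm w"
    and lm: "\<forall>v\<in>cball w \<rho>. \<bar>ln (norm v) - Re c\<bar> \<le> R - 6"
  shows "Inv (cball c R) (cball w \<rho>) 1"
proof -
  have w0: "w \<noteq> 0" using rho by auto
  define q where "q = (Im c - Im (Ln w)) / (2 * pi)"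
  define k where "k = \<lfloor>q + 1/2\<rfloor>"
  have ka: "real_of_int k \<le> q + 1/2" unfolding k_def by (rule of_int_floor_le)
  have kb: "q + 1/2 < real_of_int k + 1" unfolding k_def by (rule real_of_int_floor_add_one_gt)
  have kq: "\<bar>real_of_int k - q\<bar> \<le> 1/2" unfolding abs_le_iff using ka kb by linarith
  define lam where "lam = Ln w + (2 * of_int k * pi) * \<i>"
  have explam: "exp lam = w"
  proof -
    have "exp ((2 * of_int k * pi) * \<i>) = 1" by (rule exp_integer_2pi) auto
    then show ?thesis using w0 by (simp add: lam_def exp_add)
  qed
  have imlam: "\<bar>Im lam - Im c\<bar> \<le> pi"
  proof -
    have "Im lam - Im c = 2 * pi * (real_of_int k - q)"
      by (simp add: lam_def q_def field_simps)
    then have "\<bar>Im lam - Im c\<bar> = 2 * pi * \<bar>real_of_int k - q\<bar>" by (simp add: abs_mult)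
    also have "\<dots> \<le> 2 * pi * (1/2)" using kq by (intro mult_left_mono) auto
    finally show ?thesis by simp
  qed
  have relam: "Re lam = ln (norm w)" using w0 by (simp add: lam_def Re_Ln)
  define h where "h v = lam + Ln (v / w)" for v
  let ?T = "cball w \<rho>"
  have key: "norm (v / w - 1) < 1" if "v \<in> ?T" for v
  proof -
    have "v / w - 1 = (v - w) / w" using w0 by (simp add: field_simps)
    then have "norm (v / w - 1) = norm (v - w) / norm w"
      by (simp add: norm_divide)
    also have "\<dots> \<le> \<rho> / norm w"
      using that by (intro divide_right_mono) (auto simp: dist_norm norm_minus_commute)
    also have "\<dots> < 1" using rho by (simp add: divide_less_eq)
    finally show ?thesis .
  qed
  have re: "0 < Re (v / w)" if "v \<in> ?T" for v
  proof -
    have "\<bar>Re (v / w - 1)\<bar> < 1" using key[OF that] abs_Re_le_cmod le_less_trans by blast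
    then have "0 < Re (v / w)" by (simp only: minus_complex.sel one_complex.sel)
    then show ?thesis .
  qed
  have "continuous_on ?T h"
    unfolding h_def
    by (intro continuous_intros) (use re notin_npR in \<open>auto\<close>)
  moreover have "h ` ?T \<subseteq> cball c R"
  proof
    fix y assume "y \<in> h ` ?T"
    then obtain v where v: "v \<in> ?T" "y = h v" by auto
    have vw0: "v / w \<noteq> 0" using re[OF v(1)] by auto
    then have v0: "v \<noteq> 0" by auto
    have "Re (h v) = ln (norm v)"
      using vw0 v0 w0 by (simp add: h_def relam Re_Ln norm_divide ln_div)
    then have r1: "\<bar>Re (h v - c)\<bar> \<le> R - 6" using lm v(1) by simp
    have "\<bar>Im (Ln (v / w))\<bar> < pi/2" using re[OF v(1)] by (rule Re_Ln_pos_lt_imp)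
    then have r2: "\<bar>Im (h v - c)\<bar> \<le> 6"
      using imlam pi_less_4 by (simp add: h_def)
    have "norm (h v - c) \<le> R" using cmod_le[of "h v - c"] r1 r2 by linarith
    then show "y \<in> cball c R" using v by (simp add: dist_norm norm_minus_commute)
  qed
  moreover have "\<forall>v\<in>?T. (exp ^^ 1) (h v) = v"
  proof
    fix v assume v: "v \<in> ?T"
    have "v / w \<noteq> 0" using re[OF v] by auto
    then show "(exp ^^ 1) (h v) = v" using w0 by (simp add: h_def exp_add explam)
  qed
  ultimately show ?thesis unfolding Inv_def by blast
qed



lemma logb:
  assumes G: "0 < G" and v: "v \<in> cball (\<i> * of_real G) (G/2)"
  shows "\<bar>ln (norm v) - ln G\<bar> \<le> 1"
proof -
  have d: "norm (v - \<i> * of_real G) \<le> G/2" using v by (simp add: dist_norm norm_minus_commute)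
  have nG: "norm (\<i> * complex_of_real G) = G" using G by (simp add: norm_mult)
  have l: "G/2 \<le> norm v" using norm_triangle_ineq2[of "\<i> * of_real G" v] d nG
    by (simp add: norm_minus_commute)
  have u: "norm v \<le> 3 * G / 2" using norm_triangle_ineq[of "v - \<i> * of_real G" "\<i> * of_real G"] d nG
    by simp
  have vpos: "0 < norm v" using l G by linarith
  have "ln (norm v) \<le> ln (3 * G / 2)" using u vpos G by (subst ln_le_cancel_iff) auto
  also have "\<dots> = ln (G * (3/2))" by (simp add: field_simps)
  also have "\<dots> = ln G + ln (3/2)" using G by (rule ln_mult_pos) simp
  also have "ln (3/2::real) \<le> 1" using ln_le_minus_one[of "3/2::real"] by simp
  hence "ln G + ln (3/2) \<le> ln G + 1" by simp
  finally have a: "ln (norm v) \<le> ln G + 1" .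
  have "ln G - ln 2 = ln (G / 2)" using G by (simp add: ln_div)
  also have "\<dots> \<le> ln (norm v)" using l G by (subst ln_le_cancel_iff) auto
  finally have b0: "ln G - ln 2 \<le> ln (norm v)" .
  have "ln (2::real) \<le> 1" using ln_le_minus_one[of "2::real"] by simp
  then show ?thesis using a b0 by (simp add: abs_le_iff)
qed

lemma exp_quad: "(0::real) \<le> x \<Longrightarrow> 1 + x + x^2/2 \<le> exp x"
  using exp_lower_Taylor_quadratic by (simp add: power2_eq_square)

lemma Inv_stepF:
  assumes F: "100 \<le> F"
  shows "Inv (cball (\<i> * of_real F) (F/2)) (cball (\<i> * of_real (exp (F/2 - 7))) (exp (F/2 - 7) / 2)) 1"
    and "F + 1 \<le> exp (F/2 - 7)"
proof -
  define G where "G = exp (F/2 - 7)"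
  have G: "0 < G" by (simp add: G_def)
  show "Inv (cball (\<i> * of_real F) (F/2)) (cball (\<i> * of_real (exp (F/2 - 7))) (exp (F/2 - 7) / 2)) 1"
    unfolding G_def[symmetric]
  proof (rule Inv_cover)
    show "0 \<le> G/2" using G by simp
    show "G/2 < norm (\<i> * complex_of_real G)" using G by (simp add: norm_mult)
    show "\<forall>v\<in>cball (\<i> * complex_of_real G) (G / 2). \<bar>ln (cmod v) - Re (\<i> * complex_of_real F)\<bar> \<le> F / 2 - 6"
    proof
      fix v assume "v \<in> cball (\<i> * complex_of_real G) (G / 2)"
      from logb[OF G this] have "\<bar>ln (cmod v) - (F/2 - 7)\<bar> \<le> 1" by (simp add: G_def)
      then show "\<bar>ln (cmod v) - Re (\<i> * complex_of_real F)\<bar> \<le> F / 2 - 6" using F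
        by (simp add: abs_le_iff)
    qed
  qed
  have x: "0 \<le> F/2 - 7" using F by simp
  have "1 + (F/2-7) + (F/2-7)^2/2 \<le> exp (F/2 - 7)" by (rule exp_quad[OF x])
  moreover have "F + 1 \<le> 1 + (F/2-7) + (F/2-7)^2/2"
  proof -
    have "43 * (F/2-7) \<le> (F/2-7) * (F/2-7)" using F x by (intro mult_right_mono) auto
    then show ?thesis using F by (simp add: power2_eq_square)
  qed
  ultimately show "F + 1 \<le> exp (F/2 - 7)" by linarith
qed

lemma Inv_iterF:
  "100 \<le> F \<Longrightarrow> \<exists>F' n. F + real j \<le> F' \<and> Inv (cball (\<i> * of_real F) (F/2)) (cball (\<i> * of_real F') (F'/2)) n"
proof (induction j)
  case 0
  then show ?case using Inv_refl by auto
next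
  case (Suc j)
  then obtain F' n where F': "F + real j \<le> F'" "Inv (cball (\<i> * of_real F) (F/2)) (cball (\<i> * of_real F') (F'/2)) n"
    by blast
  have F'1: "100 \<le> F'" using F' Suc.prems by simp
  have "Inv (cball (\<i> * of_real F) (F/2)) (cball (\<i> * of_real (exp (F'/2 - 7))) (exp (F'/2 - 7) / 2)) (n + 1)"
    by (rule Inv_trans[OF F'(2) Inv_stepF(1)[OF F'1]])
  moreover have "F + real (Suc j) \<le> exp (F'/2 - 7)" using Inv_stepF(2)[OF F'1] F'(1) by simp
  ultimately show ?case by blast
qed



lemma Inv_from_real:
  assumes c: "7 \<le> c"
  shows "\<exists>n F. 100 \<le> F \<and> Inv (cball (of_real c) 1) (cball (\<i> * of_real F) (F/2)) n"
proof -
  define E where "E = exp c"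
  have E28: "28 \<le> E"
  proof -
    have "1 + c + c^2/2 \<le> E" unfolding E_def using c by (intro exp_quad) auto
    moreover have "7 * 7 \<le> c * c" using c by (intro mult_mono) auto
    ultimately show ?thesis using c by (simp add: power2_eq_square)
  qed
  have i1: "Inv (cball (of_real c) 1) (cball (of_real E) (E / 4)) 1"
    using Inv_expball[of 1 "of_real c"] by (simp add: E_def exp_of_real)
  have F100: "100 \<le> exp E"
  proof -
    have "1 + E + E^2/2 \<le> exp E" using E28 by (intro exp_quad) auto
    moreover have "28 * 28 \<le> E * E" using E28 by (intro mult_mono) auto
    ultimately show ?thesis using E28 by (simp add: power2_eq_square)
  qed
  have i2: "Inv (cball (of_real E) (E / 4)) (cball (\<i> * of_real (exp E)) (exp E / 2)) 1"
  proof (rule Inv_cover)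
    show "0 \<le> exp E / 2" by simp
    show "exp E / 2 < norm (\<i> * complex_of_real (exp E))" by (simp add: norm_mult)
    show "\<forall>v\<in>cball (\<i> * complex_of_real (exp E)) (exp E / 2). \<bar>ln (cmod v) - Re (complex_of_real E)\<bar> \<le> E / 4 - 6"
    proof
      fix v assume "v \<in> cball (\<i> * complex_of_real (exp E)) (exp E / 2)"
      from logb[OF _ this] have "\<bar>ln (cmod v) - E\<bar> \<le> 1" by simp
      then show "\<bar>ln (cmod v) - Re (complex_of_real E)\<bar> \<le> E / 4 - 6" using E28 by simp
    qed
  qed
  show ?thesis using Inv_trans[OF i1 i2] F100 by blast
qed

lemma Inv_growth:
  assumes c0: "7 \<le> c0" and e: "0 < \<epsilon>" "\<epsilon> \<le> 1"
  shows "\<exists>c k. 7 \<le> c \<and> Inv (cball (of_real c0) \<epsilon>) (cball (of_real c) 1) k"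
proof -
  have step: "\<exists>c k. 7 \<le> c \<and> Inv (cball (of_real c0) \<epsilon>) (cball (of_real c) (min 1 (3^j * \<epsilon>))) k" for j
  proof (induction j)
    case 0
    then show ?case using c0 e Inv_refl by auto
  next
    case (Suc j)
    then obtain c k where ck: "7 \<le> c" "Inv (cball (of_real c0) \<epsilon>) (cball (of_real c) (min 1 (3^j * \<epsilon>))) k"
      by blast
    define d where "d = min 1 (3^j * \<epsilon>)"
    have d: "0 < d" "d \<le> 1" using e by (auto simp: d_def)
    have i1: "Inv (cball (of_real c) d) (cball (of_real (exp c)) (exp c * d / 4)) 1"
      using Inv_expball[OF d, of "of_real c"] by (simp add: exp_of_real)
    have "1 + c + c^2/2 \<le> exp c" using ck(1) by (intro exp_quad) auto
    moreover have "7 * 7 \<le> c * c" using ck(1) by (intro mult_mono) auto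
    ultimately have ec: "12 \<le> exp c" using ck(1) by (simp add: power2_eq_square)
    have "min 1 (3^Suc j * \<epsilon>) \<le> 3 * d" unfolding d_def by (auto simp: min_def)
    also have "3 * d \<le> exp c * d / 4" using ec d by (simp add: mult_right_mono)
    finally have "cball (complex_of_real (exp c)) (min 1 (3^Suc j * \<epsilon>)) \<subseteq> cball (of_real (exp c)) (exp c * d / 4)"
      by (rule subset_cball)
    then have "Inv (cball (of_real c) d) (cball (of_real (exp c)) (min 1 (3^Suc j * \<epsilon>))) 1"
      using Inv_mono[OF i1] by blast
    then have "Inv (cball (of_real c0) \<epsilon>) (cball (of_real (exp c)) (min 1 (3^Suc j * \<epsilon>))) (k + 1)"
      using Inv_trans ck(2) d_def by blast
    moreover have "7 \<le> exp c" using ec by simp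
    ultimately show ?case by blast
  qed
  obtain j where j: "1 / \<epsilon> < 3 ^ j" using real_arch_pow[of 3 "1/\<epsilon>"] by auto
  then have "1 \<le> 3^j * \<epsilon>" using e by (simp add: field_simps)
  then have "min 1 (3^j * \<epsilon>) = 1" by simp
  then show ?thesis using step[of j] by metis
qed

lemma Inv_to_target:
  assumes rho: "0 \<le> \<rho>" "\<rho> < norm w" and F: "100 \<le> F"
  shows "\<exists>n>0. Inv (cball (\<i> * of_real F) (F/2)) (cball w \<rho>) n"
proof -
  define B where "B = \<bar>ln (norm w - \<rho>)\<bar> + \<bar>ln (norm w + \<rho>)\<bar>"
  have Bv: "\<bar>ln (norm v)\<bar> \<le> B" if v: "v \<in> cball w \<rho>" for v
  proof -
    have d: "norm (v - w) \<le> \<rho>" using v by (simp add: dist_norm norm_minus_commute)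
    have l: "norm w - \<rho> \<le> norm v" using norm_triangle_ineq2[of w v] d
      by (simp add: norm_minus_commute)
    have u: "norm v \<le> norm w + \<rho>" using norm_triangle_ineq[of "v - w" w] d by simp
    have p: "0 < norm w - \<rho>" using rho by simp
    have a: "ln (norm w - \<rho>) \<le> ln (norm v)" using l p by (subst ln_le_cancel_iff) auto
    have b: "ln (norm v) \<le> ln (norm w + \<rho>)" using u l p by (subst ln_le_cancel_iff) auto
    show ?thesis using a b unfolding B_def by linarith
  qed
  obtain j :: nat where j: "2 * B + 12 \<le> real j" using real_arch_simple by blast
  obtain F' n where F': "F + real j \<le> F'" "Inv (cball (\<i> * of_real F) (F/2)) (cball (\<i> * of_real F') (F'/2)) n"
    using Inv_iterF[OF F] by blast
  have "Inv (cball (\<i> * of_real F') (F'/2)) (cball w \<rho>) 1"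
  proof (rule Inv_cover[OF rho])
    show "\<forall>v\<in>cball w \<rho>. \<bar>ln (cmod v) - Re (\<i> * complex_of_real F')\<bar> \<le> F' / 2 - 6"
    proof
      fix v assume "v \<in> cball w \<rho>"
      from Bv[OF this] have "\<bar>ln (cmod v)\<bar> \<le> B" .
      then show "\<bar>ln (cmod v) - Re (\<i> * complex_of_real F')\<bar> \<le> F' / 2 - 6"
        using F' j F by simp
    qed
  qed
  then have "Inv (cball (\<i> * of_real F) (F/2)) (cball w \<rho>) (n + 1)" using Inv_trans[OF F'(2)] by blast
  then show ?thesis by (intro exI[of _ "n+1"]) auto
qed



lemma deriv_iter:
  "((exp ^^ n) has_field_derivative (\<Prod>j<n. exp ((exp ^^ j) z))) (at z)"
proof (induction n)
  case 0
  then show ?case by (simp add: DERIV_ident[unfolded id_def])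
next
  case (Suc n)
  have "((\<lambda>x. exp ((exp ^^ n) x)) has_field_derivative exp ((exp ^^ n) z) * (\<Prod>j<n. exp ((exp ^^ j) z))) (at z)"
    by (rule DERIV_chain'[OF Suc.IH DERIV_exp])
  then show ?case by (simp add: mult.commute)
qed

lemma holo_iter: "(exp ^^ n) holomorphic_on S"
  using deriv_iter holomorphic_on_def field_differentiable_def
  by (metis field_differentiable_at_within)

lemma im_sign:
  assumes S: "connected S" and f: "continuous_on S f" and nz: "\<forall>z\<in>S. Im (f z) \<noteq> 0"
  shows "(\<forall>z\<in>S. 0 < Im (f z)) \<or> (\<forall>z\<in>S. Im (f z) < 0)"
proof (rule ccontr)
  assume "\<not> ?thesis"
  then obtain z1 z2 where z: "z1 \<in> S" "z2 \<in> S" "Im (f z1) \<le> 0" "0 \<le> Im (f z2)"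
    by (auto simp: not_less)
  have c: "connected ((\<lambda>z. Im (f z)) ` S)"
    by (rule connected_continuous_image[OF _ S]) (intro continuous_intros f)
  have "0 \<in> {Im (f z1)..Im (f z2)}" using z by auto
  then have "0 \<in> (\<lambda>z. Im (f z)) ` S"
    using connected_contains_Icc[OF c] z(1,2) by blast
  then show False using nz by auto
qed

lemma SP:
  assumes r: "0 < r" and hol: "f holomorphic_on ball a r"
    and df: "(f has_field_derivative f') (at a)"
    and im: "\<forall>z\<in>ball a r. 0 < Im (f z)"
  shows "norm f' \<le> 2 * Im (f a) / r"
proof -
  define b where "b = f a"
  have ib: "0 < Im b" using im r by (simp add: b_def)
  define g where "g z = (f z - b) / (f z - cnj b)" for z
  have den: "f z - cnj b \<noteq> 0" if "z \<in> ball a r" for z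
  proof -
    have "0 < Im (f z)" using im that by blast
    then have "0 < Im (f z - cnj b)" using ib by simp
    then show ?thesis by auto
  qed
  have lt: "norm (g z) < 1" if "z \<in> ball a r" for z
  proof -
    define u where "u = f z"
    have iu: "0 < Im u" using im that by (simp add: u_def)
    have "(norm (u - b))^2 < (norm (u - cnj b))^2"
      unfolding cmod_power2 using iu ib
      by (simp add: power2_eq_square algebra_simps)
    then have "norm (u - b) < norm (u - cnj b)"
      by (simp add: power2_less_imp_less)
    then show ?thesis using den[OF that]
      by (simp add: g_def u_def norm_divide divide_less_eq)
  qed
  define h where "h w = g (a + of_real r * w)" for w
  have maps: "(\<lambda>w. a + of_real r * w) ` ball 0 1 \<subseteq> ball a r"
  proof
    fix y assume "y \<in> (\<lambda>w. a + of_real r * w) ` ball 0 1"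
    then obtain w where w: "norm w < 1" "y = a + of_real r * w" by auto
    have "norm (of_real r * w) < r" using w r by (simp add: norm_mult)
    then show "y \<in> ball a r" using w by (simp add: dist_norm)
  qed
  have gh: "g holomorphic_on ball a r"
    unfolding g_def by (intro holomorphic_intros hol) (use den in auto)
  have hh: "h holomorphic_on ball 0 1"
  proof -
    have "(g \<circ> (\<lambda>w. a + of_real r * w)) holomorphic_on ball 0 1"
      by (rule holomorphic_on_compose_gen[OF _ gh maps]) (intro holomorphic_intros)
    then show ?thesis by (simp add: h_def[abs_def] o_def)
  qed
  have h0: "h 0 = 0" by (simp add: h_def g_def b_def)
  have hlt: "norm (h w) < 1" if "norm w < 1" for w
  proof -
    have "w \<in> ball 0 1" using that by simp
    then have "a + of_real r * w \<in> ball a r" using maps by blast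
    then show ?thesis using lt unfolding h_def by blast
  qed
  have sch: "norm (deriv h 0) \<le> 1"
    using Schwarz_Lemma(2)[OF hh h0 hlt, of 0] by simp
  have nb: "b - cnj b = Complex 0 (2 * Im b)" by (simp add: complex_eq_iff)
  have bb: "b - cnj b \<noteq> 0" using ib unfolding nb by (simp add: complex_eq_iff)
  have dg: "(g has_field_derivative f' / (b - cnj b)) (at a)"
  proof -
    have "((\<lambda>z. (f z - b) / (f z - cnj b)) has_field_derivative
           (f' * (f a - cnj b) - f' * (f a - b)) / ((f a - cnj b) ^ Suc (Suc 0))) (at a)"
      by (rule DERIV_quotient) (use df bb in \<open>auto intro!: derivative_eq_intros simp: b_def\<close>)
    moreover have "(f' * (f a - cnj b) - f' * (f a - b)) / ((f a - cnj b) ^ Suc (Suc 0)) = f' / (b - cnj b)"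
    proof -
      have "(f' * (f a - cnj b) - f' * (f a - b)) / ((f a - cnj b) ^ Suc (Suc 0))
          = (f' * (b - cnj b)) / ((b - cnj b) * (b - cnj b))" by (simp add: b_def)
      also have "\<dots> = f' / (b - cnj b)" using bb by simp
      finally show ?thesis .
    qed
    ultimately show ?thesis by (simp add: g_def[abs_def])
  qed
  have dh: "(h has_field_derivative f' / (b - cnj b) * of_real r) (at 0)"
  proof -
    have l: "((\<lambda>w. a + of_real r * w) has_field_derivative of_real r) (at 0)"
      by (auto intro!: derivative_eq_intros)
    have "(g \<circ> (\<lambda>w. a + of_real r * w) has_field_derivative f' / (b - cnj b) * of_real r) (at 0)"
      by (rule DERIV_chain[OF _ l]) (use dg in simp)
    then show ?thesis by (simp add: h_def[abs_def] o_def)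
  qed
  have "norm (f' / (b - cnj b) * of_real r) \<le> 1" using sch DERIV_imp_deriv[OF dh] by simp
  moreover have "norm (b - cnj b) = 2 * Im b"
    using ib unfolding nb by (subst cmod_eq_Im) auto
  ultimately have "norm f' * r / (2 * Im b) \<le> 1" using r by (simp add: norm_mult norm_divide)
  then have "norm f' * r \<le> 2 * Im b" using ib by (simp add: divide_le_eq)
  then show ?thesis using r ib by (simp add: b_def le_divide_eq mult.commute)
qed



lemma sin_sq_bound:
  fixes y :: real
  assumes "cos y \<le> 1/2"
  shows "(sin y)^2 \<le> 3/4 * y^2"
proof -
  have s: "sin y = 2 * sin (y/2) * cos (y/2)" using sin_double[of "y/2"] by simp
  have c: "cos y = 2 * (cos (y/2))^2 - 1" using cos_double_cos[of "y/2"] by simp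
  have c2: "(cos (y/2))^2 \<le> 3/4" using c assms by simp
  have s2: "(sin (y/2))^2 \<le> (y/2)^2"
    using abs_sin_x_le_abs_x[of "y/2"] by (metis abs_ge_zero power2_abs power_mono)
  have "(sin y)^2 = 4 * (sin (y/2))^2 * (cos (y/2))^2" unfolding s by (simp add: power_mult_distrib)
  also have "\<dots> \<le> 4 * (y/2)^2 * (3/4)"
    by (intro mult_mono s2 c2) auto
  also have "\<dots> = 3/4 * y^2" by (simp add: power2_eq_square)
  finally show ?thesis .
qed

lemma sin_sq_le: "(sin y)^2 \<le> (y::real)^2"
  using abs_sin_x_le_abs_x[of y] by (metis abs_ge_zero power2_abs power_mono)

lemma NN:
  fixes z0 :: complex
  assumes d: "0 < \<delta>"
  shows "\<exists>z\<in>ball z0 \<delta>. \<exists>m. (exp ^^ m) z \<in> \<real>"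
proof (rule ccontr)
  assume "\<not> ?thesis"
  then have H: "\<forall>z\<in>ball z0 \<delta>. \<forall>m. Im ((exp ^^ m) z) \<noteq> 0"
    by (auto simp: complex_is_Real_iff)
  define zz where "zz j = (exp ^^ j) z0" for j
  define x where "x j = Re (zz j)" for j
  define y where "y j = Im (zz j)" for j
  define P where "P n = exp (\<Sum>j<n. x j)" for n
  have zsuc: "zz (Suc j) = exp (zz j)" for j by (simp add: zz_def)
  have ynz: "y j \<noteq> 0" for j using H d by (simp add: y_def zz_def)
  have xs: "x (Suc j) = exp (x j) * cos (y j)" for j by (simp add: x_def y_def zsuc Re_exp)
  have ys: "y (Suc j) = exp (x j) * sin (y j)" for j by (simp add: x_def y_def zsuc Im_exp)
  have Ppos: "0 < P n" for n by (simp add: P_def)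
  have Psuc: "P (Suc n) = P n * exp (x n)" for n by (simp add: P_def exp_add)
  have normD: "norm (\<Prod>j<n. exp ((exp ^^ j) z0)) = P n" for n
    unfolding prod_norm[symmetric] by (simp add: P_def exp_sum zz_def x_def)
  have Pn: "P n \<le> 2 * \<bar>y n\<bar> / \<delta>" for n
  proof -
    have conn: "connected (ball z0 \<delta>)" by simp
    have cont: "continuous_on (ball z0 \<delta>) (exp ^^ n)"
      by (rule holomorphic_on_imp_continuous_on[OF holo_iter])
    have "(\<forall>z\<in>ball z0 \<delta>. 0 < Im ((exp ^^ n) z)) \<or> (\<forall>z\<in>ball z0 \<delta>. Im ((exp ^^ n) z) < 0)"
      using im_sign[OF conn cont] H by blast
    then show ?thesis
    proof
      assume pos: "\<forall>z\<in>ball z0 \<delta>. 0 < Im ((exp ^^ n) z)"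
      have "norm (\<Prod>j<n. exp ((exp ^^ j) z0)) \<le> 2 * Im ((exp ^^ n) z0) / \<delta>"
        by (rule SP[OF d holo_iter deriv_iter pos])
      moreover have "0 < Im ((exp ^^ n) z0)" using pos d by simp
      ultimately show ?thesis using normD by (simp add: y_def zz_def)
    next
      assume neg: "\<forall>z\<in>ball z0 \<delta>. Im ((exp ^^ n) z) < 0"
      have pos: "\<forall>z\<in>ball z0 \<delta>. 0 < Im (- (exp ^^ n) z)" using neg by simp
      have hol: "(\<lambda>z. - (exp ^^ n) z) holomorphic_on ball z0 \<delta>"
        by (intro holomorphic_intros holo_iter)
      have "norm (- (\<Prod>j<n. exp ((exp ^^ j) z0))) \<le> 2 * Im (- (exp ^^ n) z0) / \<delta>"
        by (rule SP[OF d hol DERIV_minus[OF deriv_iter] pos])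
      moreover have "Im ((exp ^^ n) z0) < 0" using neg d by simp
      ultimately show ?thesis using normD by (simp add: y_def zz_def)
    qed
  qed
  have C1: "P n \<le> 2 / \<delta>" for n
  proof -
    have "\<bar>y (Suc n)\<bar> \<le> exp (x n)" using ys by (simp add: abs_mult)
    then have "P n * exp (x n) \<le> 2 * exp (x n) / \<delta>" using Pn[of "Suc n"] Psuc d
      by (simp add: divide_right_mono order_trans)
    then have "P n * exp (x n) \<le> (2 / \<delta>) * exp (x n)" by simp
    then show ?thesis by (rule mult_right_le_imp_le) simp
  qed
  define s where "s n = (y n)^2 / (P n)^2" for n
  have s_lb: "\<delta>^2 / 4 \<le> s n" for n
  proof -
    have "P n * \<delta> / 2 \<le> \<bar>y n\<bar>" using Pn[of n] d by (simp add: field_simps)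
    then have "(P n * \<delta> / 2)^2 \<le> (\<bar>y n\<bar>)^2" using Ppos[of n] d by (intro power_mono) auto
    then have "(P n)^2 * (\<delta>^2 / 4) \<le> (y n)^2" by (simp add: power_mult_distrib power_divide)
    then show ?thesis using Ppos[of n] by (simp add: s_def field_simps)
  qed
  have s_suc: "s (Suc n) = s n * ((sin (y n))^2 / (y n)^2)" for n
    using ynz[of n] Ppos[of n] by (simp add: s_def ys Psuc power_mult_distrib field_simps)
  have s_dec: "s (Suc n) \<le> s n" for n
  proof -
    have "(sin (y n))^2 / (y n)^2 \<le> 1" using sin_sq_le[of "y n"] ynz[of n] by simp
    moreover have "0 \<le> s n" by (simp add: s_def)
    ultimately show ?thesis unfolding s_suc by (rule mult_left_le)
  qed
  have s_bad: "s (Suc n) \<le> 3/4 * s n" if "cos (y n) \<le> 1/2" for n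
  proof -
    have "(sin (y n))^2 / (y n)^2 \<le> 3/4" using sin_sq_bound[OF that] ynz[of n] by (simp add: divide_le_eq)
    moreover have "0 \<le> s n" by (simp add: s_def)
    ultimately have "s n * ((sin (y n))^2 / (y n)^2) \<le> s n * (3/4)" by (rule mult_left_mono)
    then show ?thesis unfolding s_suc by simp
  qed
  have s_anti: "s m \<le> s n" if "n \<le> m" for n m
    using that
  proof (induction m)
    case 0 then show ?case by simp
  next
    case (Suc m)
    show ?case
    proof (cases "n = Suc m")
      case True then show ?thesis by simp
    next
      case False then have "n \<le> m" using Suc.prems by simp
      then show ?thesis using Suc.IH s_dec[of m] by linarith
    qed
  qed
  have good: "\<exists>N. \<forall>n\<ge>N. 1/2 < cos (y n)"
  proof (rule ccontr)
    assume "\<not> ?thesis"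
    then have bad: "\<forall>N. \<exists>n\<ge>N. cos (y n) \<le> 1/2" by (auto simp: not_less)
    have iter: "\<exists>n. s n \<le> s 0 * (3/4)^k" for k
    proof (induction k)
      case 0 then show ?case by auto
    next
      case (Suc k)
      then obtain n where n: "s n \<le> s 0 * (3/4)^k" by blast
      obtain n' where n': "n \<le> n'" "cos (y n') \<le> 1/2" using bad by blast
      have "s (Suc n') \<le> 3/4 * s n'" by (rule s_bad[OF n'(2)])
      also have "\<dots> \<le> 3/4 * s n" using s_anti[OF n'(1)] by simp
      also have "\<dots> \<le> 3/4 * (s 0 * (3/4)^k)" using n by simp
      finally show ?case by (auto simp: mult.commute mult.left_commute)
    qed
    have s0: "0 < s 0" using ynz[of 0] Ppos[of 0] by (simp add: s_def)
    obtain k where k: "(3/4::real)^k < \<delta>^2 / 4 / s 0"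
      using real_arch_pow_inv[of "\<delta>^2 / 4 / s 0" "3/4"] s0 d by auto
    obtain n where "s n \<le> s 0 * (3/4)^k" using iter by blast
    also have "\<dots> < \<delta>^2 / 4" using k s0 by (simp add: field_simps)
    finally show False using s_lb[of n] by simp
  qed
  then obtain N where N: "\<forall>n\<ge>N. 1/2 < cos (y n)" by blast
  have xpos: "0 < x n" if nN: "Suc N \<le> n" for n
  proof -
    obtain m where m: "n = Suc m" "N \<le> m" using nN by (cases n) auto
    have "1/2 < cos (y m)" using N m by simp
    then have "0 < exp (x m) * cos (y m)" by (intro mult_pos_pos) auto
    then show ?thesis using m xs[of m] by simp
  qed
  have xhalf: "1/2 \<le> x n" if nN: "Suc (Suc N) \<le> n" for n
  proof -
    obtain m where m: "n = Suc m" "Suc N \<le> m" using nN by (cases n) auto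
    have "1 < exp (x m)" using xpos[OF m(2)] by simp
    moreover have "1/2 < cos (y m)" using N m by simp
    ultimately have "1 * (1/2) \<le> exp (x m) * cos (y m)" by (intro mult_mono) auto
    then show ?thesis using m xs by simp
  qed
  define M where "M = Suc (Suc N)"
  have sumlb: "(\<Sum>j<M. x j) + real k / 2 \<le> (\<Sum>j<M + k. x j)" for k
  proof (induction k)
    case 0 then show ?case by simp
  next
    case (Suc k)
    have "1/2 \<le> x (M + k)" using xhalf M_def by simp
    then show ?case using Suc.IH by (simp add: field_simps)
  qed
  have sumub: "(\<Sum>j<n. x j) \<le> ln (2 / \<delta>)" for n
  proof -
    have "exp (\<Sum>j<n. x j) \<le> 2 / \<delta>" using C1[of n] by (simp add: P_def)
    then have "ln (exp (\<Sum>j<n. x j)) \<le> ln (2 / \<delta>)" using d by (subst ln_le_cancel_iff) auto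
    then show ?thesis by simp
  qed
  obtain k :: nat where k: "2 * (ln (2 / \<delta>) - (\<Sum>j<M. x j)) + 1 \<le> real k"
    using real_arch_simple by blast
  have a1: "(\<Sum>j<M. x j) + real k / 2 \<le> ln (2 / \<delta>)" using sumlb[of k] sumub[of "M + k"] by linarith
  show False using a1 k by (simp add: field_simps)
qed



lemma Inv_local: "0 < r \<Longrightarrow> \<exists>\<epsilon>>0. Inv (cball \<zeta> r) (cball ((exp ^^ m) \<zeta>) \<epsilon>) m"
proof (induction m arbitrary: \<zeta> r)
  case 0
  then show ?case using Inv_refl by auto
next
  case (Suc m)
  define r' where "r' = min r 1"
  have r': "0 < r'" "r' \<le> 1" using Suc.prems by (auto simp: r'_def)
  have i1: "Inv (cball \<zeta> r') (cball (exp \<zeta>) (norm (exp \<zeta>) * r' / 4)) 1"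
    by (rule Inv_expball[OF r'])
  have "0 < norm (exp \<zeta>) * r' / 4" using r' by simp
  then obtain \<epsilon> where e: "0 < \<epsilon>" "Inv (cball (exp \<zeta>) (norm (exp \<zeta>) * r' / 4)) (cball ((exp ^^ m) (exp \<zeta>)) \<epsilon>) m"
    using Suc.IH by blast
  have i2: "Inv (cball \<zeta> r') (cball ((exp ^^ m) (exp \<zeta>)) \<epsilon>) (1 + m)"
    by (rule Inv_trans[OF i1 e(2)])
  have eq1: "(exp ^^ Suc m) \<zeta> = (exp ^^ m) (exp \<zeta>)" by (simp only: funpow_Suc_right o_apply)
  have eq2: "1 + m = Suc m" by simp
  have sub: "cball \<zeta> r' \<subseteq> cball \<zeta> r" by (rule subset_cball) (simp add: r'_def)
  have "Inv (cball \<zeta> r) (cball ((exp ^^ m) (exp \<zeta>)) \<epsilon>) (1 + m)"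
    by (rule Inv_mono[OF i2 sub order_refl])
  then have "Inv (cball \<zeta> r) (cball ((exp ^^ Suc m) \<zeta>) \<epsilon>) (Suc m)"
    unfolding eq1 eq2 .
  then show ?case using e(1) by blast
qed

lemma iter_real: "(exp ^^ k) (complex_of_real t) = complex_of_real ((exp ^^ k) t)"
  by (induction k) (auto simp: exp_of_real)

lemma iter_real_ge: "t + real k \<le> (exp ^^ k) (t::real)"
proof (induction k)
  case 0 then show ?case by simp
next
  case (Suc k)
  have "(exp ^^ k) t + 1 \<le> exp ((exp ^^ k) t)" using exp_ge_add_one_self[of "(exp ^^ k) t"] by linarith
  then show ?case using Suc.IH by simp
qed

lemma MAIN:
  fixes U :: "complex set"
  assumes U: "open U" "U \<noteq> {}" and rho: "0 \<le> \<rho>" "\<rho> < norm w"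
  shows "\<exists>n>0. Inv U (cball w \<rho>) n"
proof -
  obtain z0 where z0: "z0 \<in> U" using U by blast
  obtain e where e: "0 < e" "ball z0 e \<subseteq> U" using U(1) z0 openE by blast
  define \<delta> where "\<delta> = e / 2"
  have d: "0 < \<delta>" using e by (simp add: \<delta>_def)
  obtain z m where z: "z \<in> ball z0 \<delta>" and zm: "(exp ^^ m) z \<in> \<real>" using NN[OF d] by blast
  define t where "t = Re ((exp ^^ m) z)"
  have zt: "(exp ^^ m) z = complex_of_real t"
    using zm by (simp add: t_def complex_is_Real_iff complex_eq_iff)
  define k where "k = nat \<lceil>7 - t\<rceil>"
  define c where "c = (exp ^^ k) t"
  have kt: "7 - t \<le> real k" unfolding k_def by (rule real_nat_ceiling_ge)
  have c7: "7 \<le> c" using iter_real_ge[of t k] kt unfolding c_def by linarith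
  have "(exp ^^ (k + m)) z = (exp ^^ k) ((exp ^^ m) z)" by (simp only: funpow_add o_apply)
  also have "\<dots> = complex_of_real c" by (simp only: zt iter_real c_def)
  finally have zc: "(exp ^^ (k + m)) z = complex_of_real c" .
  define r where "r = \<delta> - dist z0 z"
  have r: "0 < r" using z by (simp add: r_def)
  have cU: "cball z r \<subseteq> U"
  proof
    fix y assume "y \<in> cball z r"
    then have "dist z y \<le> r" by simp
    then have "dist z0 y < e" using dist_triangle[of z0 y z] r e
      unfolding r_def \<delta>_def by linarith
    then show "y \<in> U" using e by auto
  qed
  obtain \<epsilon> where eps: "0 < \<epsilon>" "Inv (cball z r) (cball ((exp ^^ (k + m)) z) \<epsilon>) (k + m)"
    using Inv_local[OF r] by blast
  define \<epsilon>' where "\<epsilon>' = min \<epsilon> 1"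
  have eps': "0 < \<epsilon>'" "\<epsilon>' \<le> 1" using eps by (auto simp: \<epsilon>'_def)
  have sub2: "cball (complex_of_real c) \<epsilon>' \<subseteq> cball ((exp ^^ (k + m)) z) \<epsilon>"
    unfolding zc \<epsilon>'_def by (rule subset_cball) simp
  have i1: "Inv U (cball (complex_of_real c) \<epsilon>') (k + m)"
    by (rule Inv_mono[OF eps(2) cU sub2])
  obtain c' k2 where c': "7 \<le> c'" "Inv (cball (complex_of_real c) \<epsilon>') (cball (of_real c') 1) k2"
    using Inv_growth[OF c7 eps'] by blast
  obtain n3 F where F: "100 \<le> F" "Inv (cball (of_real c') 1) (cball (\<i> * of_real F) (F/2)) n3"
    using Inv_from_real[OF c'(1)] by blast
  obtain n4 where n4: "0 < n4" and i4: "Inv (cball (\<i> * of_real F) (F/2)) (cball w \<rho>) n4"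
    using Inv_to_target[OF rho F(1)] by blast
  have j1: "Inv U (cball (of_real c') 1) (k + m + k2)" by (rule Inv_trans[OF i1 c'(2)])
  have j2: "Inv U (cball (\<i> * of_real F) (F/2)) (k + m + k2 + n3)" by (rule Inv_trans[OF j1 F(2)])
  have j3: "Inv U (cball w \<rho>) (k + m + k2 + n3 + n4)" by (rule Inv_trans[OF j2 i4])
  have j4: "0 < k + m + k2 + n3 + n4" using n4 by simp
  show ?thesis using j3 j4 by (intro exI[of _ "k + m + k2 + n3 + n4"] conjI)
qed

lemma nonzero_near:
  assumes "0 < e"
  obtains p :: complex where "p \<noteq> 0" "dist p x < e"
proof (cases "x = 0")
  case True
  then show ?thesis using that[of "of_real (e/2)"] assms by (simp add: dist_norm)
next
  case False
  then show ?thesis using that[of x] assms by simp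
qed

theorem mainTheorem2:
  shows "devaney_chaotic UNIV exp"
  unfolding devaney_chaotic_def
proof (intro conjI)
  show "infinite (UNIV :: complex set)" by (rule infinite_UNIV_char_0)
  show "exp ` UNIV \<subseteq> (UNIV :: complex set)" by simp
  show "continuous_on UNIV (exp :: complex \<Rightarrow> complex)"
    by (intro continuous_at_imp_continuous_on ballI isCont_exp)
  show "UNIV \<subseteq> closure {x \<in> UNIV. periodic_point exp x}"
  proof
    fix x :: complex
    show "x \<in> closure {x \<in> UNIV. periodic_point exp x}"
      unfolding closure_approachable
    proof (intro allI impI)
      fix e :: real assume e: "0 < e"
      obtain p where p: "p \<noteq> 0" "dist p x < e" using nonzero_near[OF e] by blast
      define r where "r = min (norm p / 2) ((e - dist p x) / 2)"
      have np: "0 < norm p" using p by simp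
      have r: "0 < r" "r < norm p" using p np by (auto simp: r_def min_def)
      have sub: "cball p r \<subseteq> ball x e"
      proof
        fix y assume "y \<in> cball p r"
        then have "dist x y < e" using dist_triangle[of x y p] p
          by (simp add: r_def dist_commute)
        then show "y \<in> ball x e" by simp
      qed
      obtain n where n: "0 < n" "Inv (ball p r) (cball p r) n"
        using MAIN[OF open_ball _ _ r(2)] r(1) by (metis centre_in_ball empty_iff less_imp_le)
      then obtain h where h: "continuous_on (cball p r) h" "h ` cball p r \<subseteq> ball p r"
        "\<forall>v\<in>cball p r. (exp ^^ n) (h v) = v"
        unfolding Inv_def by blast
      have hP: "h \<in> cball p r \<rightarrow> cball p r" using h(2) by auto
      obtain q where q: "q \<in> cball p r" "h q = q"
        using brouwer_ball[OF r(1) h(1) hP] by blast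
      have "(exp ^^ n) q = q" using h(3) q by metis
      then have "periodic_point exp q" using n(1) unfolding periodic_point_def
        by (intro exI[of _ n]) auto
      moreover have "q \<in> ball x e" using sub q(1) by blast
      then have "dist q x < e" by (simp add: dist_commute)
      ultimately show "\<exists>y\<in>{x \<in> UNIV. periodic_point exp x}. dist y x < e" by blast
    qed
  qed
  show "\<forall>(U::complex set) (V::complex set). open U \<and> open V \<and> U \<inter> UNIV \<noteq> {} \<and> V \<inter> UNIV \<noteq> {} \<longrightarrow>
        (\<exists>z\<in>U \<inter> UNIV. \<exists>n::nat. (exp ^^ n) z \<in> V)"
  proof (intro allI impI)
    fix U V :: "complex set"
    assume a: "open U \<and> open V \<and> U \<inter> UNIV \<noteq> {} \<and> V \<inter> UNIV \<noteq> {}"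
    obtain v where v: "v \<in> V" using a by blast
    obtain e where e: "0 < e" "ball v e \<subseteq> V" using a v openE by blast
    obtain w where w: "w \<noteq> 0" "dist w v < e" using nonzero_near[OF e(1)] by blast
    have wV: "w \<in> V" using w e by (auto simp: dist_commute)
    obtain n where n: "Inv U (cball w 0) n"
      using MAIN[of U 0 w] a w by (metis Int_UNIV_right zero_less_norm_iff order_refl)
    then obtain h where h: "h ` cball w 0 \<subseteq> U" "\<forall>v\<in>cball w 0. (exp ^^ n) (h v) = v"
      unfolding Inv_def by blast
    have hw: "h w \<in> U \<inter> UNIV" using h by auto
    have "(exp ^^ n) (h w) \<in> V" using h wV by auto
    then have "\<exists>n::nat. (exp ^^ n) (h w) \<in> V" by blast
    with hw show "\<exists>z\<in>U \<inter> UNIV. \<exists>n::nat. (exp ^^ n) z \<in> V" by (rule bexI[rotated])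
  qed
qed


end
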